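(* Let $f : A \longrightarrow B$ be any derivation of the cut-free proof system for $\mathbf{NL}_{\diamond}$ described in the context (axioms, residuation rules and their inverses, monotonicity rules, and the rule-form extraction rules). Then the linear map $[\![ f ]\!] : [\![ A ]\!] \to [\![ B ]\!]$ obtained from the compact closed interpretation of $f$ coincides with the linear map $G(f) : [\![ A ]\!] \to [\![ B ]\!]$ given by the generalised Kronecker delta annotating $f$; i.e. $[\![ f ]\!] = G(f)$.
   Context: \textbf{Syntax.} Formulas of $\mathbf{NL}_{\diamond}$ are built from atoms by $A ::= p \mid \Diamond A \mid \Box A \mid A\otimes A \mid A/A \mid A\backslash A$. Derivations of arrows $A\longrightarrow B$ are built by the rules: axioms $1_A : A\longrightarrow A$; residuation: from $f:\Diamond A\to B$ infer $\triangledown f: A\to\Box B$; from $f:A\otimes B\to C$ infer $\rhd f : A\to C/B$ and $\lhd f: B\to A\backslash C$; and the inverses: from $g:A\to \Box B$ infer $\triangledown^{-1}g:\Diamond A\to B$; from $g:A\to C/B$ infer $\rhd^{-1}g: A\otimes B\to C$; from $g: B\to A\backslash C$ infer $\lhd^{-1}g : A\otimes B\to C$; monotonicity: from $f:A\to B$ infer $\Diamond f:\Diamond A\to\Diamond B$ and $\Box f:\Box A\to\Box B$; from $f:A\to B$, $g:C\to D$ infer $f\otimes g: A\otimes C\to B\otimes D$, $f/g : A/D\to B/C$, $f\backslash g: B\backslash C\to A\backslash D$; extraction rules: from $f:(\Diamond A\otimes B)\otimes C\to D$ infer $\widehat\alpha^l_\diamond f:\Diamond A\otimes(B\otimes C)\to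 D$; from $f: B\otimes(\Diamond A\otimes C)\to D$ infer $\widehat\sigma^l_\diamond f:\Diamond A\otimes(B\otimes C)\to D$; from $f: A\otimes(B\otimes\Diamond C)\to D$ infer $\widehat\alpha^r_\diamond f:(A\otimes B)\otimes\Diamond C\to D$; from $f:(A\otimes\Diamond C)\otimes B\to D$ infer $\widehat\sigma^r_\diamond f:(A\otimes B)\otimes\Diamond C\to D$. \textbf{Interpretation $[\![\cdot]\!]$.} Work in finite-dimensional real vector spaces with fixed bases, identifying $V^*$ with $V$; $\epsilon_V:V\otimes V\to\mathbb R$, $\sum v_{ij}e_i\otimes e_j\mapsto\sum_i v_{ii}$, and $\eta_V:\mathbb R\to V\otimes V$, $\lambda\mapsto\sum_i\lambda\, e_i\otimes e_i$; $\alpha$ and $\sigma$ denote the standard associativity and symmetry isomorphisms. Each atom is sent to a vector space; $[\![\Diamond A]\!]=[\![\Box A]\!]=[\![A]\!]$, $[\![A\otimes B]\!]=[\![A]\!]\otimes[\![B]\!]$, $[\![A/B]\!]=[\![A]\!]\otimes[\![B]\!]^*$, $[\![A\backslash B]\!]=[\![A]\!]^*\otimes[\![B]\!]$. On derivations: $[\![1_A]\!]=1_{[\![A]\!]}$; $[\![\triangledown f]\!]=[\![\triangledown^{-1}f]\!]=[\![\Diamond f]\!]=[\![\Box f]\!]=[\![f]\!]$; $[\![\rhd f]\!]=([\![f]\!]\otimes 1)\circ(1_{[\![A]\!]}\otimes\eta_{[\![B]\!]})$; $[\![\lhd f]\!]=(1\otimes[\![f]\!])\circ(\eta_{[\![A]\!]}\otimes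 1_{[\![B]\!]})$; $[\![\rhd^{-1}g]\!]=(1_{[\![C]\!]}\otimes\epsilon_{[\![B]\!]})\circ([\![g]\!]\otimes 1_{[\![B]\!]})$; $[\![\lhd^{-1}h]\!]=(\epsilon_{[\![A]\!]}\otimes 1_{[\![C]\!]})\circ(1_{[\![A]\!]}\otimes[\![h]\!])$; $[\![f\otimes g]\!]=[\![f]\!]\otimes[\![g]\!]$; $[\![f/g]\!]=(1_{[\![B]\!]\otimes[\![C]\!]}\otimes\epsilon_{[\![D]\!]})\circ(1_{[\![B]\!]\otimes[\![C]\!]}\otimes[\![g]\!]\otimes1_{[\![D]\!]})\circ([\![f]\!]\otimes\eta_{[\![C]\!]}\otimes 1_{[\![D]\!]})$; $[\![f\backslash g]\!]=(\epsilon_{[\![B]\!]}\otimes 1_{[\![A]\!]\otimes[\![D]\!]})\circ(1_{[\![B]\!]}\otimes[\![f]\!]\otimes 1_{[\![A]\!]\otimes[\![D]\!]})\circ(1_{[\![B]\!]}\otimes\eta_{[\![A]\!]}\otimes[\![g]\!])$; $[\![\widehat\alpha^{l}_\diamond f]\!]=[\![f]\!]\circ\alpha$, $[\![\widehat\sigma^l_\diamond f]\!]=[\![f]\!]\circ\alpha^{-1}\circ(\sigma\otimes 1)\circ\alpha$, and symmetrically for the rightward rules. \textbf{Generalised Kronecker deltas.} For index lists $I=(i_1,\dots,i_n)$, $J=(j_1,\dots,j_n)$, $\delta^I_J=1$ if $i_k=j_k$ for all $k$ and $0$ otherwise; $\delta^I_J\delta^K_L=\delta^{IK}_{JL}$ (concatenation).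 Einstein summation is used: repeated indices are summed. A delta $\delta^I_J : X_M\to Y_N$ with $I+J$ a permutation of $M+N$ denotes the linear map sending a tensor $x_M\in X$ to the tensor $y_N=\delta^I_J x_M\in Y$. \textbf{Annotation $G(f)$.} Each derivation is annotated by a delta, with each formula occurrence in its endsequent carrying an index list of length equal to the rank of its interpretation: an axiom $A_I\to A_J$ (fresh lists) is annotated $\delta^I_J$; the residuation rules, their inverses, the $\Diamond,\Box$ monotonicity rules and the four extraction rules keep the same delta, the index lists of subformula occurrences simply moving with those occurrences (e.g. from $\delta^I_J: A\otimes B\to C$ one gets $\delta^I_J: B\to A\otimes C$ for $\lhd$, with $A/B$ read as $A\otimes B$ and $A\backslash B$ as $A\otimes B$ at the level of spaces); for the binary monotonicity rules, from $\delta^I_J : A_I\to B_J$ and $\delta^K_L : C_K\to D_L$ one gets $\delta^{IK}_{JL}: A_I\otimes C_K\to B_J\otimes D_L$ for $\otimes$, $\delta^{IK}_{JL}: A_I\otimes D_L\to B_J\otimes C_K$ for $/$, and $\delta^{IK}_{JL}: B_J\otimes C_K\to A_I\otimes D_L$ for $\backslash$. $G(f)$ is the linear map $[\![A]\!]\to[\![B]\!]$ denoted by the resulting annotated delta. *)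

theory Defs
  imports Complex_Main
begin

datatype 'a fm =
    At 'a
  | Dia "'a fm"
  | Box "'a fm"
  | Ten "'a fm" "'a fm"     (* A \<otimes> B *)
  | Ovr "'a fm" "'a fm"     (* A / B *)
  | Und "'a fm" "'a fm"     (* A \ B *)

text \<open>Constructors store those formulas needed to compute the interpretation;
  the judgement derives f A B (i.e. f : A --> B) checks consistency.\<close>

datatype 'a deriv =
    Ax "'a fm"
  | Tri "'a deriv"
  | TriInv "'a deriv"
  | Rhd "'a fm" "'a fm" "'a fm" "'a deriv"
  | Lhd "'a fm" "'a fm" "'a fm" "'a deriv"
  | RhdInv "'a fm" "'a fm" "'a fm" "'a deriv"
  | LhdInv "'a fm" "'a fm" "'a fm" "'a deriv"
  | DiaM "'a deriv"
  | BoxM "'a deriv"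
  | TenM "'a fm" "'a fm" "'a fm" "'a fm" "'a deriv" "'a deriv"
  | OvrM "'a fm" "'a fm" "'a fm" "'a fm" "'a deriv" "'a deriv"
  | UndM "'a fm" "'a fm" "'a fm" "'a fm" "'a deriv" "'a deriv"
  | AlphaL "'a fm" "'a fm" "'a fm" "'a fm" "'a deriv"
  | SigmaL "'a fm" "'a fm" "'a fm" "'a fm" "'a deriv"
  | AlphaR "'a fm" "'a fm" "'a fm" "'a fm" "'a deriv"
  | SigmaR "'a fm" "'a fm" "'a fm" "'a fm" "'a deriv"

inductive derives :: "'a deriv \<Rightarrow> 'a fm \<Rightarrow> 'a fm \<Rightarrow> bool" where
  ax: "derives (Ax A) A A"
| tri: "derives f (Dia A) B \<Longrightarrow> derives (Tri f) A (Box B)"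
| tri_inv: "derives g A (Box B) \<Longrightarrow> derives (TriInv g) (Dia A) B"
| rhd: "derives f (Ten A B) C \<Longrightarrow> derives (Rhd A B C f) A (Ovr C B)"
| lhd: "derives f (Ten A B) C \<Longrightarrow> derives (Lhd A B C f) B (Und A C)"
| rhd_inv: "derives g A (Ovr C B) \<Longrightarrow> derives (RhdInv A B C g) (Ten A B) C"
| lhd_inv: "derives h B (Und A C) \<Longrightarrow> derives (LhdInv A B C h) (Ten A B) C"
| dia_m: "derives f A B \<Longrightarrow> derives (DiaM f) (Dia A) (Dia B)"
| box_m: "derives f A B \<Longrightarrow> derives (BoxM f) (Box A) (Box B)"
| ten_m: "derives f A B \<Longrightarrow> derives g C D \<Longrightarrow> derives (TenM A B C D f g) (Ten A C) (Ten B D)"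
| ovr_m: "derives f A B \<Longrightarrow> derives g C D \<Longrightarrow> derives (OvrM A B C D f g) (Ovr A D) (Ovr B C)"
| und_m: "derives f A B \<Longrightarrow> derives g C D \<Longrightarrow> derives (UndM A B C D f g) (Und B C) (Und A D)"
| alpha_l: "derives f (Ten (Ten (Dia A) B) C) D \<Longrightarrow>
            derives (AlphaL A B C D f) (Ten (Dia A) (Ten B C)) D"
| sigma_l: "derives f (Ten B (Ten (Dia A) C)) D \<Longrightarrow>
            derives (SigmaL A B C D f) (Ten (Dia A) (Ten B C)) D"
| alpha_r: "derives f (Ten A (Ten B (Dia C))) D \<Longrightarrow>
            derives (AlphaR A B C D f) (Ten (Ten A B) (Dia C)) D"
| sigma_r: "derives f (Ten (Ten A (Dia C)) B) D \<Longrightarrow>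
            derives (SigmaR A B C D f) (Ten (Ten A B) (Dia C)) D"

section \<open>Spaces: tensor products of based spaces, flattened\<close>

text \<open>A space is a tensor product of atom spaces, given by its list of dimensions
  (its shape). Basis vectors are index lists in idx s. Tensor products of spaces are
  concatenation of shapes (so the standard associativity and unit isomorphisms become
  identities on basis indices); V* is identified with V.\<close>

primrec sh :: "('a \<Rightarrow> nat) \<Rightarrow> 'a fm \<Rightarrow> nat list" where
  "sh d (At p) = [d p]"
| "sh d (Dia A) = sh d A"
| "sh d (Box A) = sh d A"
| "sh d (Ten A B) = sh d A @ sh d B"
| "sh d (Ovr A B) = sh d A @ sh d B"
| "sh d (Und A B) = sh d A @ sh d B"

primrec rank :: "'a fm \<Rightarrow> nat" where
  "rank (At p) = 1"
| "rank (Dia A) = rank A"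
| "rank (Box A) = rank A"
| "rank (Ten A B) = rank A + rank B"
| "rank (Ovr A B) = rank A + rank B"
| "rank (Und A B) = rank A + rank B"

definition idx :: "nat list \<Rightarrow> nat list set" where
  "idx s = {I. length I = length s \<and> (\<forall>k<length s. I ! k < s ! k)}"

text \<open>A linear map between such spaces is represented by its matrix:
  M I J is the coefficient of the basis vector e_J in M(e_I).\<close>

type_synonym mat = "nat list \<Rightarrow> nat list \<Rightarrow> real"

definition idm :: mat where
  "idm I J = (if I = J then 1 else 0)"

text \<open>Associativity isomorphism (and its inverse) in flattened bases.\<close>
definition alpha :: mat where
  "alpha = idm"

definition alpha_inv :: mat where
  "alpha_inv = idm"

text \<open>comp s g f = g o f, where s is the shape of the middle space.\<close>
definition comp :: "nat list \<Rightarrow> mat \<Rightarrow> mat \<Rightarrow> mat" where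
  "comp s g f = (\<lambda>I K. \<Sum>J\<in>idx s. f I J * g J K)"

text \<open>tens m n f g = f (x) g, where m, n are the ranks of domain and codomain of f.\<close>
definition tens :: "nat \<Rightarrow> nat \<Rightarrow> mat \<Rightarrow> mat \<Rightarrow> mat" where
  "tens m n f g = (\<lambda>I J. f (take m I) (take n J) * g (drop m I) (drop n J))"

text \<open>eta_V : R -> V (x) V and eps_V : V (x) V -> R for V of rank n.\<close>
definition eta :: "nat \<Rightarrow> mat" where
  "eta n = (\<lambda>I J. if I = [] \<and> take n J = drop n J then 1 else 0)"

definition eps :: "nat \<Rightarrow> mat" where
  "eps n = (\<lambda>I J. if J = [] \<and> take n I = drop n I then 1 else 0)"

text \<open>sigma m : X (x) Y -> Y (x) X, with m the rank of X.\<close>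
definition sigma :: "nat \<Rightarrow> mat" where
  "sigma m = (\<lambda>I J. if J = drop m I @ take m I then 1 else 0)"

section \<open>Compact closed interpretation of derivations\<close>

primrec interp :: "('a \<Rightarrow> nat) \<Rightarrow> 'a deriv \<Rightarrow> mat" where
  "interp d (Ax A) = idm"
| "interp d (Tri f) = interp d f"
| "interp d (TriInv f) = interp d f"
| "interp d (Rhd A B C f) =
     comp (sh d A @ sh d B @ sh d B)
       (tens (rank A + rank B) (rank C) (interp d f) idm)
       (tens (rank A) (rank A) idm (eta (rank B)))"
| "interp d (Lhd A B C f) =
     comp (sh d A @ sh d A @ sh d B)
       (tens (rank A) (rank A) idm (interp d f))
       (tens 0 (2 * rank A) (eta (rank A)) idm)"
| "interp d (RhdInv A B C g) =
     comp (sh d C @ sh d B @ sh d B)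
       (tens (rank C) (rank C) idm (eps (rank B)))
       (tens (rank A) (rank C + rank B) (interp d g) idm)"
| "interp d (LhdInv A B C h) =
     comp (sh d A @ sh d A @ sh d C)
       (tens (2 * rank A) 0 (eps (rank A)) idm)
       (tens (rank A) (rank A) idm (interp d h))"
| "interp d (DiaM f) = interp d f"
| "interp d (BoxM f) = interp d f"
| "interp d (TenM A B C D f g) = tens (rank A) (rank B) (interp d f) (interp d g)"
| "interp d (OvrM A B C D f g) =
     comp (sh d B @ sh d C @ sh d D @ sh d D)
       (tens (rank B + rank C) (rank B + rank C) idm (eps (rank D)))
       (comp (sh d B @ sh d C @ sh d C @ sh d D)
          (tens (rank B + rank C) (rank B + rank C) idm
             (tens (rank C) (rank D) (interp d g) idm))
          (tens (rank A) (rank B) (interp d f)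
             (tens 0 (2 * rank C) (eta (rank C)) idm)))"
| "interp d (UndM A B C D f g) =
     comp (sh d B @ sh d B @ sh d A @ sh d D)
       (tens (2 * rank B) 0 (eps (rank B)) idm)
       (comp (sh d B @ sh d A @ sh d A @ sh d D)
          (tens (rank B) (rank B) idm (tens (rank A) (rank B) (interp d f) idm))
          (tens (rank B) (rank B) idm (tens 0 (2 * rank A) (eta (rank A)) (interp d g))))"
| "interp d (AlphaL A B C D f) = comp (sh d A @ sh d B @ sh d C) (interp d f) alpha"
| "interp d (SigmaL A B C D f) =
     comp (sh d B @ sh d A @ sh d C) (interp d f)
       (comp (sh d B @ sh d A @ sh d C) alpha_inv
          (comp (sh d A @ sh d B @ sh d C)
             (tens (rank A + rank B) (rank B + rank A) (sigma (rank A)) idm) alpha))"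
| "interp d (AlphaR A B C D f) = comp (sh d A @ sh d B @ sh d C) (interp d f) alpha"
| "interp d (SigmaR A B C D f) =
     comp (sh d A @ sh d C @ sh d B) (interp d f)
       (comp (sh d A @ sh d C @ sh d B) alpha_inv
          (comp (sh d A @ sh d B @ sh d C)
             (tens (rank A) (rank A) idm (sigma (rank B))) alpha))"

section \<open>Generalised Kronecker delta annotation\<close>

text \<open>Index variables are lists of naturals; binary rules tag the variables of the left
  premise with 0 and of the right premise with 1, guaranteeing freshness. An annotation
  is (P, L, R): the delta's (upper, lower) index pairs P (delta^I_J = product over
  zip I J), and the index-variable lists carried by the antecedent (L) and the
  succedent (R), flattened in order of the formula occurrences.\<close>

type_synonym var = "nat list"
type_synonym annotation = "(var \<times> var) list \<times> var list \<times> var list"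

definition ren :: "nat \<Rightarrow> annotation \<Rightarrow> annotation" where
  "ren k = (\<lambda>(P, L, R). (map (\<lambda>(p, q). (k # p, k # q)) P, map ((#) k) L, map ((#) k) R))"

primrec annot :: "'a deriv \<Rightarrow> annotation" where
  "annot (Ax A) =
     (let L = map (\<lambda>k. [k]) [0..<rank A]; R = map (\<lambda>k. [k]) [rank A..<2 * rank A]
      in (zip L R, L, R))"
| "annot (Tri f) = annot f"
| "annot (TriInv f) = annot f"
| "annot (Rhd A B C f) = (case annot f of (P, L, R) \<Rightarrow> (P, take (rank A) L, R @ drop (rank A) L))"
| "annot (Lhd A B C f) = (case annot f of (P, L, R) \<Rightarrow> (P, drop (rank A) L, take (rank A) L @ R))"
| "annot (RhdInv A B C g) = (case annot g of (P, L, R) \<Rightarrow> (P, L @ drop (rank C) R, take (rank C) R))"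
| "annot (LhdInv A B C h) = (case annot h of (P, L, R) \<Rightarrow> (P, take (rank A) R @ L, drop (rank A) R))"
| "annot (DiaM f) = annot f"
| "annot (BoxM f) = annot f"
| "annot (TenM A B C D f g) =
     (case ren 0 (annot f) of (P1, I, J) \<Rightarrow> case ren 1 (annot g) of (P2, K, L) \<Rightarrow>
        (P1 @ P2, I @ K, J @ L))"
| "annot (OvrM A B C D f g) =
     (case ren 0 (annot f) of (P1, I, J) \<Rightarrow> case ren 1 (annot g) of (P2, K, L) \<Rightarrow>
        (P1 @ P2, I @ L, J @ K))"
| "annot (UndM A B C D f g) =
     (case ren 0 (annot f) of (P1, I, J) \<Rightarrow> case ren 1 (annot g) of (P2, K, L) \<Rightarrow>
        (P1 @ P2, J @ K, I @ L))"
| "annot (AlphaL A B C D f) = annot f"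
| "annot (SigmaL A B C D f) =
     (case annot f of (P, L, R) \<Rightarrow>
        (P, take (rank A) (drop (rank B) L) @ take (rank B) L @ drop (rank B + rank A) L, R))"
| "annot (AlphaR A B C D f) = annot f"
| "annot (SigmaR A B C D f) =
     (case annot f of (P, L, R) \<Rightarrow>
        (P, take (rank A) L @ drop (rank A + rank C) L @ take (rank C) (drop (rank A) L), R))"

text \<open>The linear map denoted by an annotated delta delta^P : X_M -> Y_N, x_M |-> delta x_M
  (Einstein summation): its matrix entry at input basis index I and output basis index J
  is the product of the Kronecker deltas under the assignment M := I, N := J.\<close>

definition delta_map :: "(var \<times> var) list \<Rightarrow> var list \<Rightarrow> var list \<Rightarrow> mat" where
  "delta_map P M N = (\<lambda>I J.
     let v = (\<lambda>x. the (map_of (zip M I @ zip N J) x))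
     in prod_list (map (\<lambda>(p, q). if v p = v q then 1 else 0) P))"

definition G :: "'a deriv \<Rightarrow> mat" where
  "G f = (case annot f of (P, L, R) \<Rightarrow> delta_map P L R)"

end

theory Submission
  imports Defs
begin


lemma len_sh: "length (sh d A) = rank A" by (induct A) auto

lemma idx_len: "I \<in> idx s \<Longrightarrow> length I = length s" by (simp add: idx_def)

lemma idx_app: "length x = length s1 \<Longrightarrow> (x @ y \<in> idx (s1 @ s2)) = (x \<in> idx s1 \<and> y \<in> idx s2)"
proof -
  assume l: "length x = length s1"
  show ?thesis
  proof
    assume a: "x @ y \<in> idx (s1 @ s2)"
    hence "length y = length s2" using l by (simp add: idx_def)
    moreover have "\<forall>k<length s2. y ! k < s2 ! k"
    proof (intro allI impI)
      fix k assume "k < length s2"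
      hence "length s1 + k < length (s1 @ s2)" by simp
      moreover have "\<forall>k<length (s1 @ s2). (x @ y) ! k < (s1 @ s2) ! k" using a by (simp add: idx_def)
      ultimately have "(x @ y) ! (length s1 + k) < (s1 @ s2) ! (length s1 + k)" by blast
      thus "y ! k < s2 ! k" using l by (simp add: nth_append)
    qed
    moreover have "\<forall>k<length s1. x ! k < s1 ! k"
    proof (intro allI impI)
      fix k assume k: "k < length s1"
      hence "k < length (s1 @ s2)" by simp
      moreover have "\<forall>k<length (s1 @ s2). (x @ y) ! k < (s1 @ s2) ! k" using a by (simp add: idx_def)
      ultimately have "(x @ y) ! k < (s1 @ s2) ! k" by blast
      thus "x ! k < s1 ! k" using l k by (simp add: nth_append)
    qed
    ultimately show "x \<in> idx s1 \<and> y \<in> idx s2" using l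
      by (simp add: idx_def)
  qed (auto simp: idx_def nth_append l)
qed

lemma idx_split: "I \<in> idx (s1 @ s2) \<Longrightarrow> \<exists>x y. I = x @ y \<and> x \<in> idx s1 \<and> y \<in> idx s2"
proof -
  assume a: "I \<in> idx (s1 @ s2)"
  hence l: "length (take (length s1) I) = length s1" by (simp add: idx_def)
  have "take (length s1) I @ drop (length s1) I \<in> idx (s1 @ s2)" using a by simp
  thus ?thesis using idx_app[OF l] by (metis append_take_drop_id)
qed

lemma finite_idx: "finite (idx s)"
proof -
  have "idx s \<subseteq> {I. set I \<subseteq> {..<Max (set s)} \<and> length I = length s}"
  proof
    fix I assume "I \<in> idx s"
    hence "length I = length s" "\<forall>k<length s. I ! k < s ! k" by (auto simp: idx_def)
    moreover have "\<forall>k<length s. s ! k \<le> Max (set s)" by auto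
    ultimately show "I \<in> {I. set I \<subseteq> {..<Max (set s)} \<and> length I = length s}"
      by (auto simp: in_set_conv_nth) (metis order_less_le_trans)
  qed
  thus ?thesis by (rule finite_subset) (rule finite_lists_length_eq, simp)
qed

lemma sum_single:
  assumes "finite S" "X \<in> S" "\<forall>K\<in>S. F K \<noteq> 0 \<longrightarrow> K = X"
  shows "sum F S = (F X :: real)"
proof -
  have "sum F S = F X + sum F (S - {X})" using assms by (simp add: sum.remove)
  also have "sum F (S - {X}) = 0" using assms by (intro sum.neutral) auto
  finally show ?thesis by simp
qed

lemma comp_single:
  assumes "X \<in> idx s" "\<forall>K\<in>idx s. f I K * g K J \<noteq> 0 \<longrightarrow> K = X"
  shows "comp s g f I J = f I X * g X J"
  unfolding comp_def using sum_single[OF finite_idx assms] by simp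

lemma comp2_single:
  assumes "X1 \<in> idx s2" "X2 \<in> idx s3"
    "\<forall>K1\<in>idx s2. \<forall>K2\<in>idx s3. C I K1 * D K1 K2 * E K2 J \<noteq> 0 \<longrightarrow> K1 = X1 \<and> K2 = X2"
  shows "comp s3 E (comp s2 D C) I J = C I X1 * D X1 X2 * E X2 J"
proof -
  have "comp s3 E (comp s2 D C) I J = (\<Sum>K2\<in>idx s3. \<Sum>K1\<in>idx s2. C I K1 * D K1 K2 * E K2 J)"
    unfolding comp_def by (simp add: sum_distrib_right)
  also have "\<dots> = (\<Sum>K1\<in>idx s2. C I K1 * D K1 X2 * E X2 J)"
    apply (rule sum_single[OF finite_idx assms(2)])
    using assms(3) by (metis (no_types, lifting) sum.neutral)
  also have "\<dots> = C I X1 * D X1 X2 * E X2 J"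
    apply (rule sum_single[OF finite_idx assms(1)])
    using assms(2,3) by blast
  finally show ?thesis .
qed

lemma comp_idm_r: "I \<in> idx s \<Longrightarrow> comp s g idm I K = g I K"
  unfolding comp_def idm_def
  by (subst sum_single[OF finite_idx, of I]) auto

lemma comp_idm_l: "K \<in> idx s \<Longrightarrow> comp s idm g I K = g I K"
  unfolding comp_def idm_def
  by (subst sum_single[OF finite_idx, of K]) auto

definition asg :: "var list \<Rightarrow> nat list \<Rightarrow> var \<Rightarrow> nat" where
  "asg Ls Is = (\<lambda>x. the (map_of (zip Ls Is) x))"

definition ev :: "(var \<times> var) list \<Rightarrow> (var \<Rightarrow> nat) \<Rightarrow> real" where
  "ev P v = prod_list (map (\<lambda>(p, q). if v p = v q then 1 else 0) P)"

lemma G_eq: "annot f = (P, L, R) \<Longrightarrow> length I = length L \<Longrightarrow> G f I J = ev P (asg (L @ R) (I @ J))"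
  by (simp add: G_def delta_map_def ev_def asg_def zip_append Let_def)

lemma perm_distinct: "distinct xs \<Longrightarrow> set xs = set ys \<Longrightarrow> length xs = length ys \<Longrightarrow> distinct ys"
  by (metis card_distinct distinct_card)

lemma asg_perm:
  assumes "distinct Ls" "length Ls = length Is" "length Ls' = length Is'" "length Ls' = length Ls"
    "set (zip Ls Is) = set (zip Ls' Is')"
  shows "asg Ls Is = asg Ls' Is'"
proof -
  have s: "set Ls' = set Ls"
    using assms by (metis map_fst_zip set_map)
  hence d: "distinct Ls'" using perm_distinct assms by metis
  have "map_of (zip Ls Is) = map_of (zip Ls' Is')"
    using assms d by (subst map_of_inject_set) auto
  thus ?thesis by (simp add: asg_def)
qed

lemma map_of_tag: "length X = length Is \<Longrightarrow> map_of (zip (map ((#) a) X) Is) (a # x) = map_of (zip X Is) x"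
  by (induct X arbitrary: Is) (auto simp: zip_Cons1 split: list.splits)

lemma map_of_zip_none: "x \<notin> set X \<Longrightarrow> map_of (zip X Is) x = None"
  by (induct X arbitrary: Is) (auto simp: zip_Cons1 split: list.splits)

lemma map_of_tag_none: "a \<noteq> b \<Longrightarrow> map_of (zip (map ((#) a) X) Is) (b # x) = None"
  by (induct X arbitrary: Is) (auto simp: zip_Cons1 split: list.splits)

lemma asg_tag0: "length X = length Is \<Longrightarrow>
   asg (map ((#) 0) X @ map ((#) 1) Y) (Is @ Js) \<circ> (#) 0 = asg X Is"
  by (auto simp: asg_def zip_append map_of_append map_of_tag map_of_tag_none map_add_def
      fun_eq_iff map_of_zip_none split: option.splits)

lemma asg_tag1: "length X = length Is \<Longrightarrow> length Y = length Js \<Longrightarrow>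
   asg (map ((#) 0) X @ map ((#) 1) Y) (Is @ Js) \<circ> (#) 1 = asg Y Js"
  by (auto simp: asg_def zip_append map_of_append map_of_tag map_of_tag_none map_add_def
      fun_eq_iff map_of_zip_none split: option.splits)

lemma ev_append: "ev (P1 @ P2) v = ev P1 v * ev P2 v" by (simp add: ev_def)

lemma ev_ren: "ev (map (\<lambda>(p, q). (k # p, k # q)) P) v = ev P (v \<circ> (#) k)"
  by (induct P) (auto simp: ev_def)



lemma set_td: "set L = set (take n L) \<union> set (drop n L)"
  by (metis append_take_drop_id set_append)

lemma set_td2: "set L = set (take n L) \<union> set (take m (drop n L)) \<union> set (drop (n + m) L)"
  by (metis set_td drop_drop add.commute Un_assoc)

definition inv_ok :: "'a fm \<Rightarrow> 'a fm \<Rightarrow> annotation \<Rightarrow> bool" where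
  "inv_ok A B a = (case a of (P, L, R) \<Rightarrow> length L = rank A \<and> length R = rank B \<and> distinct (L @ R))"

lemma inv: "derives f A B \<Longrightarrow> inv_ok A B (annot f)"
proof (induction rule: derives.induct)
  case (ax A)
  then show ?case
    by (auto simp: inv_ok_def Let_def distinct_map inj_on_def)
next
  case (rhd f A B C)
  obtain P L R where an: "annot f = (P,L,R)" by (cases "annot f")
  with rhd.IH have h: "length L = rank A + rank B" "length R = rank C" "distinct (L@R)" by (simp_all add: inv_ok_def)
  have s: "set L = set (take (rank A) L) \<union> set (drop (rank A) L)" by (rule set_td)
  have "distinct (take (rank A) L @ R @ drop (rank A) L)"
    by (rule perm_distinct[OF h(3)]) ((simp only: set_append s; blast), simp add: h)
  thus ?case using h an by (simp add: inv_ok_def del: distinct_append)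
next
  case (lhd f A B C)
  obtain P L R where an: "annot f = (P,L,R)" by (cases "annot f")
  with lhd.IH have h: "length L = rank A + rank B" "length R = rank C" "distinct (L@R)" by (simp_all add: inv_ok_def)
  have s: "set L = set (take (rank A) L) \<union> set (drop (rank A) L)" by (rule set_td)
  have "distinct (drop (rank A) L @ take (rank A) L @ R)"
    by (rule perm_distinct[OF h(3)]) ((simp only: set_append s; blast), simp add: h)
  thus ?case using h an by (simp add: inv_ok_def del: distinct_append)
next
  case (rhd_inv g A C B)
  obtain P L R where an: "annot g = (P,L,R)" by (cases "annot g")
  with rhd_inv.IH have h: "length L = rank A" "length R = rank C + rank B" "distinct (L@R)" by (simp_all add: inv_ok_def)
  have s: "set R = set (take (rank C) R) \<union> set (drop (rank C) R)" by (rule set_td)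
  have "distinct (L @ drop (rank C) R @ take (rank C) R)"
    by (rule perm_distinct[OF h(3)]) ((simp only: set_append s; blast), simp add: h)
  thus ?case using h an by (simp add: inv_ok_def del: distinct_append)
next
  case (lhd_inv h B A C)
  obtain P L R where an: "annot h = (P,L,R)" by (cases "annot h")
  with lhd_inv.IH have h: "length L = rank B" "length R = rank A + rank C" "distinct (L@R)" by (simp_all add: inv_ok_def)
  have s: "set R = set (take (rank A) R) \<union> set (drop (rank A) R)" by (rule set_td)
  have "distinct (take (rank A) R @ L @ drop (rank A) R)"
    by (rule perm_distinct[OF h(3)]) ((simp only: set_append s; blast), simp add: h)
  thus ?case using h an by (simp add: inv_ok_def del: distinct_append)
next
  case (ten_m f A B g C D)
  then show ?case
    apply (cases "annot f"; cases "annot g")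
    apply (auto simp: inv_ok_def ren_def distinct_map inj_on_def)
    done
next
  case (ovr_m f A B g C D)
  then show ?case
    apply (cases "annot f"; cases "annot g")
    apply (auto simp: inv_ok_def ren_def distinct_map inj_on_def)
    done
next
  case (und_m f A B g C D)
  then show ?case
    apply (cases "annot f"; cases "annot g")
    apply (auto simp: inv_ok_def ren_def distinct_map inj_on_def)
    done
next
  case (sigma_l f B A C D)
  obtain P L R where an: "annot f = (P,L,R)" by (cases "annot f")
  with sigma_l.IH have h: "length L = rank B + rank A + rank C" "length R = rank D" "distinct (L@R)" by (simp_all add: inv_ok_def)
  have s: "set L = set (take (rank B) L) \<union> set (take (rank A) (drop (rank B) L)) \<union> set (drop (rank B + rank A) L)" by (rule set_td2)
  have "distinct ((take (rank A) (drop (rank B) L) @ take (rank B) L @ drop (rank B + rank A) L) @ R)"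
    by (rule perm_distinct[OF h(3)]) ((simp only: set_append s; blast), simp add: h)
  thus ?case using h an by (simp add: inv_ok_def del: distinct_append)
next
  case (sigma_r f A C B D)
  obtain P L R where an: "annot f = (P,L,R)" by (cases "annot f")
  with sigma_r.IH have h: "length L = rank A + rank C + rank B" "length R = rank D" "distinct (L@R)" by (simp_all add: inv_ok_def)
  have s: "set L = set (take (rank A) L) \<union> set (take (rank C) (drop (rank A) L)) \<union> set (drop (rank A + rank C) L)" by (rule set_td2)
  have "distinct ((take (rank A) L @ drop (rank A + rank C) L @ take (rank C) (drop (rank A) L)) @ R)"
    by (rule perm_distinct[OF h(3)]) ((simp only: set_append s; blast), simp add: h)
  thus ?case using h an by (simp add: inv_ok_def del: distinct_append)
qed (auto simp: inv_ok_def)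



lemma app_idx[intro, simp]: "x \<in> idx s1 \<Longrightarrow> y \<in> idx s2 \<Longrightarrow> x @ y \<in> idx (s1 @ s2)"
  using idx_app idx_len by blast

lemma idx_split3: "I \<in> idx (s1 @ s2 @ s3) \<Longrightarrow> \<exists>x y z. I = x @ y @ z \<and> x \<in> idx s1 \<and> y \<in> idx s2 \<and> z \<in> idx s3"
  by (metis idx_split)

lemma idx_split4: "I \<in> idx (s1 @ s2 @ s3 @ s4) \<Longrightarrow> \<exists>x y z w. I = x @ y @ z @ w \<and> x \<in> idx s1 \<and> y \<in> idx s2 \<and> z \<in> idx s3 \<and> w \<in> idx s4"
  by (metis idx_split)

lemma lenI: "I \<in> idx (sh d A) \<Longrightarrow> length I = rank A"
  by (simp add: idx_len len_sh)

lemma split_len: "length L = m + n \<Longrightarrow> \<exists>La Lb. L = La @ Lb \<and> length La = m \<and> length Lb = n"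
  by (rule exI[of _ "take m L"], rule exI[of _ "drop m L"]) simp

lemma comp_cong: "(\<forall>K\<in>idx s. h I K = h' I K) \<Longrightarrow> comp s g h I J = comp s g h' I J"
  by (simp add: comp_def)

lemma inv': "derives f A B \<Longrightarrow> annot f = (P, L, R) \<Longrightarrow> length L = rank A \<and> length R = rank B \<and> distinct (L @ R)"
  using inv[of f A B] by (simp add: inv_ok_def)

lemma prod01: "prod_list (map (\<lambda>k. if Q k then 1 else (0::real)) xs) = (if \<forall>k\<in>set xs. Q k then 1 else 0)"
  by (induct xs) auto

lemma ax_case:
  assumes "length I = n" "length J = n"
  shows "ev (zip (map (\<lambda>k. [k]) [0..<n]) (map (\<lambda>k. [k]) [n..<2 * n]))
      (asg (map (\<lambda>k. [k]) [0..<n] @ map (\<lambda>k. [k]) [n..<2 * n]) (I @ J)) = idm I J"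
proof -
  have e: "map (\<lambda>k. [k]) [0..<n] @ map (\<lambda>k. [k]) [n..<2 * n] = map (\<lambda>k. [k]) [0..<2*n]"
    by (metis map_append mult_2 le_add1 upt_add_eq_append zero_le)
  have a: "asg (map (\<lambda>k. [k]) [0..<2*n]) (I @ J) [k] = (I @ J) ! k" if "k < 2 * n" for k
  proof -
    have "map_of (zip (map (\<lambda>k. [k]) [0..<2*n]) (I @ J)) [k] = Some ((I @ J) ! k)"
      apply (subst map_of_eq_Some_iff)
      using that assms by (auto simp: distinct_map inj_on_def set_zip intro!: exI[of _ k])
    thus ?thesis by (simp add: asg_def)
  qed
  have z: "zip (map (\<lambda>k. [k]) [0..<n]) (map (\<lambda>k. [k]) [n..<2 * n]) = map (\<lambda>k. ([k], [n + k])) [0..<n]"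
    by (rule nth_equalityI) auto
  have "ev (map (\<lambda>k. ([k], [n + k])) [0..<n]) (asg (map (\<lambda>k. [k]) [0..<2*n]) (I @ J))
       = prod_list (map (\<lambda>k. if I ! k = J ! k then 1 else 0) [0..<n])"
    unfolding ev_def
    apply (simp add: comp_def)
    apply (rule arg_cong[where f = prod_list])
    apply (rule map_cong, simp)
    using a assms by (auto simp: nth_append)
  also have "\<dots> = idm I J" unfolding prod01 idm_def
    using assms by (auto simp: list_eq_iff_nth_eq)
  finally show ?thesis using e z by simp
qed


lemmas dsimps = tens_def idm_def eta_def eps_def sigma_def

lemma rhd_interp: assumes I: "I \<in> idx (sh d A)" and c: "c \<in> idx (sh d C)" and b: "b \<in> idx (sh d B)"
  shows "interp d (Rhd A B C f) I (c @ b) = interp d f (I @ b) c"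
proof -
  note ln = lenI[OF I] lenI[OF c] lenI[OF b]
  have m: "I @ b @ b \<in> idx (sh d A @ sh d B @ sh d B)" using I b by (intro app_idx)
  have nz: "K = I @ b @ b" if K: "K \<in> idx (sh d A @ sh d B @ sh d B)"
     and nz: "tens (rank A) (rank A) idm (eta (rank B)) I K * tens (rank A + rank B) (rank C) (interp d f) idm K (c @ b) \<noteq> 0" for K
  proof -
    obtain x y z where K: "K = x @ y @ z" "x \<in> idx (sh d A)" "y \<in> idx (sh d B)" "z \<in> idx (sh d B)"
      using idx_split3[OF K] by blast
    note ln2 = lenI[OF K(2)] lenI[OF K(3)] lenI[OF K(4)]
    show ?thesis using nz unfolding K(1) using ln ln2 by (simp add: dsimps split: if_splits)
  qed
  show ?thesis
    unfolding interp.simps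
    apply (subst comp_single[OF m])
    using nz apply blast
    using ln by (simp add: dsimps)
qed

lemma lhd_interp: assumes a: "a \<in> idx (sh d A)" and c: "c \<in> idx (sh d C)" and b: "b \<in> idx (sh d B)"
  shows "interp d (Lhd A B C f) b (a @ c) = interp d f (a @ b) c"
proof -
  note ln = lenI[OF a] lenI[OF c] lenI[OF b]
  have m: "a @ a @ b \<in> idx (sh d A @ sh d A @ sh d B)" using a b by (intro app_idx)
  have nz: "K = a @ a @ b" if K: "K \<in> idx (sh d A @ sh d A @ sh d B)"
     and nz: "tens 0 (2 * rank A) (eta (rank A)) idm b K * tens (rank A) (rank A) idm (interp d f) K (a @ c) \<noteq> 0" for K
  proof -
    obtain x y z where K: "K = x @ y @ z" "x \<in> idx (sh d A)" "y \<in> idx (sh d A)" "z \<in> idx (sh d B)"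
      using idx_split3[OF K] by blast
    note ln2 = lenI[OF K(2)] lenI[OF K(3)] lenI[OF K(4)]
    show ?thesis using nz unfolding K(1) using ln ln2 by (simp add: dsimps split: if_splits)
  qed
  show ?thesis
    unfolding interp.simps
    apply (subst comp_single[OF m])
    using nz apply blast
    using ln by (simp add: dsimps)
qed

lemma rhd_inv_interp: assumes a: "a \<in> idx (sh d A)" and c: "c \<in> idx (sh d C)" and b: "b \<in> idx (sh d B)"
  shows "interp d (RhdInv A B C g) (a @ b) c = interp d g a (c @ b)"
proof -
  note ln = lenI[OF a] lenI[OF c] lenI[OF b]
  have m: "c @ b @ b \<in> idx (sh d C @ sh d B @ sh d B)" using c b by (intro app_idx)
  have nz: "K = c @ b @ b" if K: "K \<in> idx (sh d C @ sh d B @ sh d B)"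
     and nz: "tens (rank A) (rank C + rank B) (interp d g) idm (a @ b) K * tens (rank C) (rank C) idm (eps (rank B)) K c \<noteq> 0" for K
  proof -
    obtain x y z where K: "K = x @ y @ z" "x \<in> idx (sh d C)" "y \<in> idx (sh d B)" "z \<in> idx (sh d B)"
      using idx_split3[OF K] by blast
    note ln2 = lenI[OF K(2)] lenI[OF K(3)] lenI[OF K(4)]
    show ?thesis using nz unfolding K(1) using ln ln2 by (simp add: dsimps split: if_splits)
  qed
  show ?thesis
    unfolding interp.simps
    apply (subst comp_single[OF m])
    using nz apply blast
    using ln by (simp add: dsimps)
qed

lemma lhd_inv_interp: assumes a: "a \<in> idx (sh d A)" and c: "c \<in> idx (sh d C)" and b: "b \<in> idx (sh d B)"
  shows "interp d (LhdInv A B C h) (a @ b) c = interp d h b (a @ c)"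
proof -
  note ln = lenI[OF a] lenI[OF c] lenI[OF b]
  have m: "a @ a @ c \<in> idx (sh d A @ sh d A @ sh d C)" using a c by (intro app_idx)
  have nz: "K = a @ a @ c" if K: "K \<in> idx (sh d A @ sh d A @ sh d C)"
     and nz: "tens (rank A) (rank A) idm (interp d h) (a @ b) K * tens (2 * rank A) 0 (eps (rank A)) idm K c \<noteq> 0" for K
  proof -
    obtain x y z where K: "K = x @ y @ z" "x \<in> idx (sh d A)" "y \<in> idx (sh d A)" "z \<in> idx (sh d C)"
      using idx_split3[OF K] by blast
    note ln2 = lenI[OF K(2)] lenI[OF K(3)] lenI[OF K(4)]
    show ?thesis using nz unfolding K(1) using ln ln2 by (simp add: dsimps split: if_splits)
  qed
  show ?thesis
    unfolding interp.simps
    apply (subst comp_single[OF m])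
    using nz apply blast
    using ln by (simp add: dsimps)
qed

lemma ten_interp: assumes a: "a \<in> idx (sh d A)" and c: "c \<in> idx (sh d C)"
  and b: "b \<in> idx (sh d B)" and dd: "e \<in> idx (sh d D)"
  shows "interp d (TenM A B C D f g) (a @ c) (b @ e) = interp d f a b * interp d g c e"
  using lenI[OF a] lenI[OF b] by (simp add: dsimps)

lemma ovr_interp: assumes a: "a \<in> idx (sh d A)" and c: "c \<in> idx (sh d C)"
  and b: "b \<in> idx (sh d B)" and dd: "e \<in> idx (sh d D)"
  shows "interp d (OvrM A B C D f g) (a @ e) (b @ c) = interp d f a b * interp d g c e"
proof -
  note ln = lenI[OF a] lenI[OF c] lenI[OF b] lenI[OF dd]
  have m1: "b @ c @ c @ e \<in> idx (sh d B @ sh d C @ sh d C @ sh d D)" using b c dd by (intro app_idx)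
  have m2: "b @ c @ e @ e \<in> idx (sh d B @ sh d C @ sh d D @ sh d D)" using b c dd by (intro app_idx)
  have nz: "K1 = b @ c @ c @ e \<and> K2 = b @ c @ e @ e"
    if K1: "K1 \<in> idx (sh d B @ sh d C @ sh d C @ sh d D)" and K2: "K2 \<in> idx (sh d B @ sh d C @ sh d D @ sh d D)"
     and nz: "tens (rank A) (rank B) (interp d f) (tens 0 (2 * rank C) (eta (rank C)) idm) (a @ e) K1 *
          tens (rank B + rank C) (rank B + rank C) idm (tens (rank C) (rank D) (interp d g) idm) K1 K2 *
          tens (rank B + rank C) (rank B + rank C) idm (eps (rank D)) K2 (b @ c) \<noteq> 0" for K1 K2
  proof -
    obtain x y z w where K: "K1 = x @ y @ z @ w" "x \<in> idx (sh d B)" "y \<in> idx (sh d C)" "z \<in> idx (sh d C)" "w \<in> idx (sh d D)"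
      using idx_split4[OF K1] by blast
    obtain x' y' z' w' where K': "K2 = x' @ y' @ z' @ w'" "x' \<in> idx (sh d B)" "y' \<in> idx (sh d C)" "z' \<in> idx (sh d D)" "w' \<in> idx (sh d D)"
      using idx_split4[OF K2] by blast
    note ln2 = lenI[OF K(2)] lenI[OF K(3)] lenI[OF K(4)] lenI[OF K(5)]
    note ln3 = lenI[OF K'(2)] lenI[OF K'(3)] lenI[OF K'(4)] lenI[OF K'(5)]
    show ?thesis using nz unfolding K(1) K'(1) using ln ln2 ln3 by (simp add: dsimps split: if_splits)
  qed
  show ?thesis
    unfolding interp.simps
    apply (subst comp2_single[OF m1 m2])
    using nz apply blast
    using ln by (simp add: dsimps)
qed

lemma und_interp: assumes a: "a \<in> idx (sh d A)" and c: "c \<in> idx (sh d C)"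
  and b: "b \<in> idx (sh d B)" and dd: "e \<in> idx (sh d D)"
  shows "interp d (UndM A B C D f g) (b @ c) (a @ e) = interp d f a b * interp d g c e"
proof -
  note ln = lenI[OF a] lenI[OF c] lenI[OF b] lenI[OF dd]
  have m1: "b @ a @ a @ e \<in> idx (sh d B @ sh d A @ sh d A @ sh d D)" using b a dd by (intro app_idx)
  have m2: "b @ b @ a @ e \<in> idx (sh d B @ sh d B @ sh d A @ sh d D)" using b a dd by (intro app_idx)
  have nz: "K1 = b @ a @ a @ e \<and> K2 = b @ b @ a @ e"
    if K1: "K1 \<in> idx (sh d B @ sh d A @ sh d A @ sh d D)" and K2: "K2 \<in> idx (sh d B @ sh d B @ sh d A @ sh d D)"
     and nz: "tens (rank B) (rank B) idm (tens 0 (2 * rank A) (eta (rank A)) (interp d g)) (b @ c) K1 *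
          tens (rank B) (rank B) idm (tens (rank A) (rank B) (interp d f) idm) K1 K2 *
          tens (2 * rank B) 0 (eps (rank B)) idm K2 (a @ e) \<noteq> 0" for K1 K2
  proof -
    obtain x y z w where K: "K1 = x @ y @ z @ w" "x \<in> idx (sh d B)" "y \<in> idx (sh d A)" "z \<in> idx (sh d A)" "w \<in> idx (sh d D)"
      using idx_split4[OF K1] by blast
    obtain x' y' z' w' where K': "K2 = x' @ y' @ z' @ w'" "x' \<in> idx (sh d B)" "y' \<in> idx (sh d B)" "z' \<in> idx (sh d A)" "w' \<in> idx (sh d D)"
      using idx_split4[OF K2] by blast
    note ln2 = lenI[OF K(2)] lenI[OF K(3)] lenI[OF K(4)] lenI[OF K(5)]
    note ln3 = lenI[OF K'(2)] lenI[OF K'(3)] lenI[OF K'(4)] lenI[OF K'(5)]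
    show ?thesis using nz unfolding K(1) K'(1) using ln ln2 ln3 by (simp add: dsimps split: if_splits)
  qed
  show ?thesis
    unfolding interp.simps
    apply (subst comp2_single[OF m1 m2])
    using nz apply blast
    using ln by (simp add: dsimps)
qed

lemma alphal_interp: "I \<in> idx (sh d (Ten (Dia A) (Ten B C))) \<Longrightarrow> interp d (AlphaL A B C D f) I J = interp d f I J"
  by (simp add: alpha_def comp_idm_r)

lemma alphar_interp: "I \<in> idx (sh d (Ten (Ten A B) (Dia C))) \<Longrightarrow> interp d (AlphaR A B C D f) I J = interp d f I J"
  by (simp add: alpha_def comp_idm_r)

lemma sigmal_interp: assumes a: "a \<in> idx (sh d A)" and b: "b \<in> idx (sh d B)" and c: "c \<in> idx (sh d C)"
  shows "interp d (SigmaL A B C D f) (a @ b @ c) J = interp d f (b @ a @ c) J"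
proof -
  note ln = lenI[OF a] lenI[OF b] lenI[OF c]
  let ?T = "tens (rank A + rank B) (rank B + rank A) (sigma (rank A)) idm"
  have I: "a @ b @ c \<in> idx (sh d A @ sh d B @ sh d C)" using a b c by (intro app_idx)
  have m: "b @ a @ c \<in> idx (sh d B @ sh d A @ sh d C)" using a b c by (intro app_idx)
  have "interp d (SigmaL A B C D f) (a @ b @ c) J = comp (sh d B @ sh d A @ sh d C) (interp d f) ?T (a @ b @ c) J"
    unfolding interp.simps
    by (rule comp_cong) (simp add: alpha_def alpha_inv_def comp_idm_l comp_idm_r I)
  also have "\<dots> = interp d f (b @ a @ c) J"
  proof (subst comp_single[OF m])
    show "\<forall>K\<in>idx (sh d B @ sh d A @ sh d C). ?T (a @ b @ c) K * interp d f K J \<noteq> 0 \<longrightarrow> K = b @ a @ c"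
    proof (intro ballI impI)
      fix K assume K: "K \<in> idx (sh d B @ sh d A @ sh d C)" and nz: "?T (a @ b @ c) K * interp d f K J \<noteq> 0"
      obtain x y z where K: "K = x @ y @ z" "x \<in> idx (sh d B)" "y \<in> idx (sh d A)" "z \<in> idx (sh d C)"
        using idx_split3[OF K] by blast
      note ln2 = lenI[OF K(2)] lenI[OF K(3)] lenI[OF K(4)]
      show "K = b @ a @ c" using nz unfolding K(1) using ln ln2 by (simp add: dsimps split: if_splits)
    qed
    show "?T (a @ b @ c) (b @ a @ c) * interp d f (b @ a @ c) J = interp d f (b @ a @ c) J"
      using ln by (simp add: dsimps)
  qed
  finally show ?thesis .
qed

lemma sigmar_interp: assumes a: "a \<in> idx (sh d A)" and b: "b \<in> idx (sh d B)" and c: "c \<in> idx (sh d C)"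
  shows "interp d (SigmaR A B C D f) (a @ b @ c) J = interp d f (a @ c @ b) J"
proof -
  note ln = lenI[OF a] lenI[OF b] lenI[OF c]
  let ?T = "tens (rank A) (rank A) idm (sigma (rank B))"
  have I: "a @ b @ c \<in> idx (sh d A @ sh d B @ sh d C)" using a b c by (intro app_idx)
  have m: "a @ c @ b \<in> idx (sh d A @ sh d C @ sh d B)" using a b c by (intro app_idx)
  have "interp d (SigmaR A B C D f) (a @ b @ c) J = comp (sh d A @ sh d C @ sh d B) (interp d f) ?T (a @ b @ c) J"
    unfolding interp.simps
    by (rule comp_cong) (simp add: alpha_def alpha_inv_def comp_idm_l comp_idm_r I)
  also have "\<dots> = interp d f (a @ c @ b) J"
  proof (subst comp_single[OF m])
    show "\<forall>K\<in>idx (sh d A @ sh d C @ sh d B). ?T (a @ b @ c) K * interp d f K J \<noteq> 0 \<longrightarrow> K = a @ c @ b"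
    proof (intro ballI impI)
      fix K assume K: "K \<in> idx (sh d A @ sh d C @ sh d B)" and nz: "?T (a @ b @ c) K * interp d f K J \<noteq> 0"
      obtain x y z where K: "K = x @ y @ z" "x \<in> idx (sh d A)" "y \<in> idx (sh d C)" "z \<in> idx (sh d B)"
        using idx_split3[OF K] by blast
      note ln2 = lenI[OF K(2)] lenI[OF K(3)] lenI[OF K(4)]
      show "K = a @ c @ b" using nz unfolding K(1) using ln ln2 by (simp add: dsimps split: if_splits)
    qed
    show "?T (a @ b @ c) (a @ c @ b) * interp d f (a @ c @ b) J = interp d f (a @ c @ b) J"
      using ln by (simp add: dsimps)
  qed
  finally show ?thesis .
qed

lemma rhd_G: assumes an: "annot f = (P, L, R)" and l: "length L = rank A + rank B" "length R = rank C"
  "distinct (L @ R)" "length I = rank A" "length b = rank B" "length c = rank C"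
  shows "G (Rhd A B C f) I (c @ b) = G f (I @ b) c"
proof -
  obtain La Lb where Ls: "L = La @ Lb" "length La = rank A" "length Lb = rank B" using split_len l by blast
  have "G (Rhd A B C f) I (c @ b) = ev P (asg (La @ R @ Lb) (I @ c @ b))" using an l Ls by (simp add: G_eq)
  also have "\<dots> = ev P (asg (La @ Lb @ R) (I @ b @ c))"
    apply (rule arg_cong[where f = "ev P"], rule sym, rule asg_perm)
    using l Ls by (auto simp: zip_append)
  also have "\<dots> = G f (I @ b) c" using an l Ls by (simp add: G_eq)
  finally show ?thesis .
qed

lemma lhd_G: assumes an: "annot f = (P, L, R)" and l: "length L = rank A + rank B" "length R = rank C"
  "distinct (L @ R)" "length a = rank A" "length b = rank B" "length c = rank C"
  shows "G (Lhd A B C f) b (a @ c) = G f (a @ b) c"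
proof -
  obtain La Lb where Ls: "L = La @ Lb" "length La = rank A" "length Lb = rank B" using split_len l by blast
  have "G (Lhd A B C f) b (a @ c) = ev P (asg (Lb @ La @ R) (b @ a @ c))" using an l Ls by (simp add: G_eq)
  also have "\<dots> = ev P (asg (La @ Lb @ R) (a @ b @ c))"
    apply (rule arg_cong[where f = "ev P"], rule sym, rule asg_perm)
    using l Ls by (auto simp: zip_append)
  also have "\<dots> = G f (a @ b) c" using an l Ls by (simp add: G_eq)
  finally show ?thesis .
qed

lemma rhd_inv_G: assumes an: "annot g = (P, L, R)" and l: "length L = rank A" "length R = rank C + rank B"
  "distinct (L @ R)" "length a = rank A" "length b = rank B" "length c = rank C"
  shows "G (RhdInv A B C g) (a @ b) c = G g a (c @ b)"
proof -
  obtain Rc Rb where Rs: "R = Rc @ Rb" "length Rc = rank C" "length Rb = rank B" using split_len l by blast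
  have "G (RhdInv A B C g) (a @ b) c = ev P (asg (L @ Rb @ Rc) (a @ b @ c))" using an l Rs by (simp add: G_eq)
  also have "\<dots> = ev P (asg (L @ Rc @ Rb) (a @ c @ b))"
    apply (rule arg_cong[where f = "ev P"], rule sym, rule asg_perm)
    using l Rs by (auto simp: zip_append)
  also have "\<dots> = G g a (c @ b)" using an l Rs by (simp add: G_eq)
  finally show ?thesis .
qed

lemma lhd_inv_G: assumes an: "annot h = (P, L, R)" and l: "length L = rank B" "length R = rank A + rank C"
  "distinct (L @ R)" "length a = rank A" "length b = rank B" "length c = rank C"
  shows "G (LhdInv A B C h) (a @ b) c = G h b (a @ c)"
proof -
  obtain Ra Rc where Rs: "R = Ra @ Rc" "length Ra = rank A" "length Rc = rank C" using split_len l by blast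
  have "G (LhdInv A B C h) (a @ b) c = ev P (asg (Ra @ L @ Rc) (a @ b @ c))" using an l Rs by (simp add: G_eq)
  also have "\<dots> = ev P (asg (L @ Ra @ Rc) (b @ a @ c))"
    apply (rule arg_cong[where f = "ev P"], rule sym, rule asg_perm)
    using l Rs by (auto simp: zip_append)
  also have "\<dots> = G h b (a @ c)" using an l Rs by (simp add: G_eq)
  finally show ?thesis .
qed

lemma split_len3: "length L = m + n + k \<Longrightarrow> \<exists>X Y Z. L = X @ Y @ Z \<and> length X = m \<and> length Y = n \<and> length Z = k"
  by (rule exI[of _ "take m L"], rule exI[of _ "take n (drop m L)"], rule exI[of _ "drop (m + n) L"])
     (simp, metis append_take_drop_id drop_drop add.commute)

lemma sigmal_G: assumes an: "annot f = (P, L, R)" and l: "length L = rank B + rank A + rank C"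
  "distinct (L @ R)" "length a = rank A" "length b = rank B" "length c = rank C"
  "length R = rank D" "length J = rank D"
  shows "G (SigmaL A B C D f) (a @ b @ c) J = G f (b @ a @ c) J"
proof -
  obtain Lb La Lc where Ls: "L = Lb @ La @ Lc" "length Lb = rank B" "length La = rank A" "length Lc = rank C"
    using split_len3 l by blast
  have "G (SigmaL A B C D f) (a @ b @ c) J = ev P (asg (La @ Lb @ Lc @ R) (a @ b @ c @ J))" using an l Ls by (simp add: G_eq)
  also have "\<dots> = ev P (asg (Lb @ La @ Lc @ R) (b @ a @ c @ J))"
    apply (rule arg_cong[where f = "ev P"], rule sym, rule asg_perm)
    using l Ls by (auto simp: zip_append)
  also have "\<dots> = G f (b @ a @ c) J" using an l Ls by (simp add: G_eq)
  finally show ?thesis .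
qed

lemma sigmar_G: assumes an: "annot f = (P, L, R)" and l: "length L = rank A + rank C + rank B"
  "distinct (L @ R)" "length a = rank A" "length b = rank B" "length c = rank C"
  "length R = rank D" "length J = rank D"
  shows "G (SigmaR A B C D f) (a @ b @ c) J = G f (a @ c @ b) J"
proof -
  obtain La Lc Lb where Ls: "L = La @ Lc @ Lb" "length La = rank A" "length Lc = rank C" "length Lb = rank B"
    using split_len3 l by blast
  have "G (SigmaR A B C D f) (a @ b @ c) J = ev P (asg (La @ Lb @ Lc @ R) (a @ b @ c @ J))" using an l Ls by (simp add: G_eq)
  also have "\<dots> = ev P (asg (La @ Lc @ Lb @ R) (a @ c @ b @ J))"
    apply (rule arg_cong[where f = "ev P"], rule sym, rule asg_perm)
    using l Ls by (auto simp: zip_append)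
  also have "\<dots> = G f (a @ c @ b) J" using an l Ls by (simp add: G_eq)
  finally show ?thesis .
qed

lemma bin_core: assumes l: "length Lf = length a" "length Rf = length b" "length Lg = length c" "length Rg = length e"
  shows "ev (map (\<lambda>(p, q). (0 # p, 0 # q)) P1 @ map (\<lambda>(p, q). (1 # p, 1 # q)) P2)
           (asg (map ((#) 0) (Lf @ Rf) @ map ((#) 1) (Lg @ Rg)) ((a @ b) @ (c @ e)))
       = ev P1 (asg (Lf @ Rf) (a @ b)) * ev P2 (asg (Lg @ Rg) (c @ e))"
proof -
  have t0: "asg (map ((#) 0) (Lf @ Rf) @ map ((#) 1) (Lg @ Rg)) ((a @ b) @ (c @ e)) \<circ> (#) 0 = asg (Lf @ Rf) (a @ b)"
    by (rule asg_tag0) (simp add: l)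
  have t1: "asg (map ((#) 0) (Lf @ Rf) @ map ((#) 1) (Lg @ Rg)) ((a @ b) @ (c @ e)) \<circ> (#) 1 = asg (Lg @ Rg) (c @ e)"
    by (rule asg_tag1) (simp_all add: l)
  show ?thesis unfolding ev_append ev_ren t0 t1 ..
qed

lemma dist_canon: "distinct (Lf @ Rf) \<Longrightarrow> distinct (Lg @ Rg) \<Longrightarrow> distinct (map ((#) (0::nat)) (Lf @ Rf) @ map ((#) 1) (Lg @ Rg))"
  by (simp only: distinct_append distinct_map) (auto simp: inj_on_def)

lemma ten_G: assumes af: "annot f = (P1, Lf, Rf)" and ag: "annot g = (P2, Lg, Rg)"
  and l: "length Lf = length a" "length Rf = length b" "length Lg = length c" "length Rg = length e"
  and df: "distinct (Lf @ Rf)" and dg: "distinct (Lg @ Rg)"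
  shows "G (TenM A B C D f g) (a @ c) (b @ e) = G f a b * G g c e"
proof -
  have an: "annot (TenM A B C D f g) = (map (\<lambda>(p, q). (0 # p, 0 # q)) P1 @ map (\<lambda>(p, q). (1 # p, 1 # q)) P2,
      map ((#) 0) Lf @ map ((#) 1) Lg, map ((#) 0) Rf @ map ((#) 1) Rg)"
    by (simp add: af ag ren_def)
  have "G (TenM A B C D f g) (a @ c) (b @ e) = ev (map (\<lambda>(p, q). (0 # p, 0 # q)) P1 @ map (\<lambda>(p, q). (1 # p, 1 # q)) P2)
       (asg ((map ((#) 0) Lf @ map ((#) 1) Lg) @ (map ((#) 0) Rf @ map ((#) 1) Rg)) ((a @ c) @ (b @ e)))"
    by (rule G_eq[OF an]) (simp add: l)
  also have "asg ((map ((#) 0) Lf @ map ((#) 1) Lg) @ (map ((#) 0) Rf @ map ((#) 1) Rg)) ((a @ c) @ (b @ e))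
     = asg (map ((#) 0) (Lf @ Rf) @ map ((#) 1) (Lg @ Rg)) ((a @ b) @ (c @ e))"
    apply (rule sym, rule asg_perm[OF dist_canon[OF df dg]])
    using l by (auto simp: zip_append)
  also have "ev (map (\<lambda>(p, q). (0 # p, 0 # q)) P1 @ map (\<lambda>(p, q). (1 # p, 1 # q)) P2) \<dots> = G f a b * G g c e"
    by (simp only: bin_core[OF l] G_eq[OF af l(1)[symmetric]] G_eq[OF ag l(3)[symmetric]])
  finally show ?thesis .
qed

lemma ovr_G: assumes af: "annot f = (P1, Lf, Rf)" and ag: "annot g = (P2, Lg, Rg)"
  and l: "length Lf = length a" "length Rf = length b" "length Lg = length c" "length Rg = length e"
  and df: "distinct (Lf @ Rf)" and dg: "distinct (Lg @ Rg)"
  shows "G (OvrM A B C D f g) (a @ e) (b @ c) = G f a b * G g c e"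
proof -
  have an: "annot (OvrM A B C D f g) = (map (\<lambda>(p, q). (0 # p, 0 # q)) P1 @ map (\<lambda>(p, q). (1 # p, 1 # q)) P2,
      map ((#) 0) Lf @ map ((#) 1) Rg, map ((#) 0) Rf @ map ((#) 1) Lg)"
    by (simp add: af ag ren_def)
  have "G (OvrM A B C D f g) (a @ e) (b @ c) = ev (map (\<lambda>(p, q). (0 # p, 0 # q)) P1 @ map (\<lambda>(p, q). (1 # p, 1 # q)) P2)
       (asg ((map ((#) 0) Lf @ map ((#) 1) Rg) @ (map ((#) 0) Rf @ map ((#) 1) Lg)) ((a @ e) @ (b @ c)))"
    by (rule G_eq[OF an]) (simp add: l)
  also have "asg ((map ((#) 0) Lf @ map ((#) 1) Rg) @ (map ((#) 0) Rf @ map ((#) 1) Lg)) ((a @ e) @ (b @ c))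
     = asg (map ((#) 0) (Lf @ Rf) @ map ((#) 1) (Lg @ Rg)) ((a @ b) @ (c @ e))"
    apply (rule sym, rule asg_perm[OF dist_canon[OF df dg]])
    using l by (auto simp: zip_append)
  also have "ev (map (\<lambda>(p, q). (0 # p, 0 # q)) P1 @ map (\<lambda>(p, q). (1 # p, 1 # q)) P2) \<dots> = G f a b * G g c e"
    by (simp only: bin_core[OF l] G_eq[OF af l(1)[symmetric]] G_eq[OF ag l(3)[symmetric]])
  finally show ?thesis .
qed

lemma und_G: assumes af: "annot f = (P1, Lf, Rf)" and ag: "annot g = (P2, Lg, Rg)"
  and l: "length Lf = length a" "length Rf = length b" "length Lg = length c" "length Rg = length e"
  and df: "distinct (Lf @ Rf)" and dg: "distinct (Lg @ Rg)"
  shows "G (UndM A B C D f g) (b @ c) (a @ e) = G f a b * G g c e"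
proof -
  have an: "annot (UndM A B C D f g) = (map (\<lambda>(p, q). (0 # p, 0 # q)) P1 @ map (\<lambda>(p, q). (1 # p, 1 # q)) P2,
      map ((#) 0) Rf @ map ((#) 1) Lg, map ((#) 0) Lf @ map ((#) 1) Rg)"
    by (simp add: af ag ren_def)
  have "G (UndM A B C D f g) (b @ c) (a @ e) = ev (map (\<lambda>(p, q). (0 # p, 0 # q)) P1 @ map (\<lambda>(p, q). (1 # p, 1 # q)) P2)
       (asg ((map ((#) 0) Rf @ map ((#) 1) Lg) @ (map ((#) 0) Lf @ map ((#) 1) Rg)) ((b @ c) @ (a @ e)))"
    by (rule G_eq[OF an]) (simp add: l)
  also have "asg ((map ((#) 0) Rf @ map ((#) 1) Lg) @ (map ((#) 0) Lf @ map ((#) 1) Rg)) ((b @ c) @ (a @ e))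
     = asg (map ((#) 0) (Lf @ Rf) @ map ((#) 1) (Lg @ Rg)) ((a @ b) @ (c @ e))"
    apply (rule sym, rule asg_perm[OF dist_canon[OF df dg]])
    using l by (auto simp: zip_append)
  also have "ev (map (\<lambda>(p, q). (0 # p, 0 # q)) P1 @ map (\<lambda>(p, q). (1 # p, 1 # q)) P2) \<dots> = G f a b * G g c e"
    by (simp only: bin_core[OF l] G_eq[OF af l(1)[symmetric]] G_eq[OF ag l(3)[symmetric]])
  finally show ?thesis .
qed



lemma main: "derives f A B \<Longrightarrow> \<forall>I\<in>idx (sh d A). \<forall>J\<in>idx (sh d B). interp d f I J = G f I J"
proof (induction rule: derives.induct)
  case (ax A)
  show ?case
  proof (intro ballI)
    fix I J assume I: "I \<in> idx (sh d A)" and J: "J \<in> idx (sh d A)"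
    have "G (Ax A) I J = idm I J"
      using ax_case[OF lenI[OF I] lenI[OF J]] lenI[OF I]
      by (simp add: G_def delta_map_def ev_def asg_def zip_append Let_def)
    thus "interp d (Ax A) I J = G (Ax A) I J" by simp
  qed
next
  case (tri f A B)
  then show ?case by (simp add: G_def)
next
  case (tri_inv f A B)
  then show ?case by (simp add: G_def)
next
  case (dia_m f A B)
  then show ?case by (simp add: G_def)
next
  case (box_m f A B)
  then show ?case by (simp add: G_def)
next
  case (alpha_l f A B C D)
  then show ?case by (simp add: G_def alpha_def comp_idm_r)
next
  case (alpha_r f A B C D)
  then show ?case by (simp add: G_def alpha_def comp_idm_r)
next
  case (rhd f A B C)
  show ?case
  proof (intro ballI)
    fix I J assume I: "I \<in> idx (sh d A)" and J: "J \<in> idx (sh d (Ovr C B))"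
    obtain c b where cb: "J = c @ b" "c \<in> idx (sh d C)" "b \<in> idx (sh d B)" using idx_split[OF J[simplified]] by blast
    obtain P L R where an: "annot f = (P, L, R)" by (cases "annot f")
    note iv = inv'[OF rhd.hyps an]
    have "interp d (Rhd A B C f) I (c @ b) = interp d f (I @ b) c" by (rule rhd_interp[OF I cb(2,3)])
    also have "\<dots> = G f (I @ b) c" using rhd.IH app_idx[OF I cb(3)] cb(2) by simp
    also have "\<dots> = G (Rhd A B C f) I (c @ b)"
      by (rule rhd_G[symmetric, OF an]) (use iv lenI[OF I] lenI[OF cb(2)] lenI[OF cb(3)] in simp_all)
    finally show "interp d (Rhd A B C f) I J = G (Rhd A B C f) I J" using cb by simp
  qed
next
  case (lhd f A B C)
  show ?case
  proof (intro ballI)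
    fix I J assume I: "I \<in> idx (sh d B)" and J: "J \<in> idx (sh d (Und A C))"
    obtain a c where ac: "J = a @ c" "a \<in> idx (sh d A)" "c \<in> idx (sh d C)" using idx_split[OF J[simplified]] by blast
    obtain P L R where an: "annot f = (P, L, R)" by (cases "annot f")
    note iv = inv'[OF lhd.hyps an]
    have "interp d (Lhd A B C f) I (a @ c) = interp d f (a @ I) c" by (rule lhd_interp[OF ac(2,3) I])
    also have "\<dots> = G f (a @ I) c" using lhd.IH app_idx[OF ac(2) I] ac(3) by simp
    also have "\<dots> = G (Lhd A B C f) I (a @ c)"
      by (rule lhd_G[symmetric, OF an]) (use iv lenI[OF I] lenI[OF ac(2)] lenI[OF ac(3)] in simp_all)
    finally show "interp d (Lhd A B C f) I J = G (Lhd A B C f) I J" using ac by simp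
  qed
next
  case (rhd_inv g A C B)
  show ?case
  proof (intro ballI)
    fix I J assume I: "I \<in> idx (sh d (Ten A B))" and J: "J \<in> idx (sh d C)"
    obtain a b where ab: "I = a @ b" "a \<in> idx (sh d A)" "b \<in> idx (sh d B)" using idx_split[OF I[simplified]] by blast
    obtain P L R where an: "annot g = (P, L, R)" by (cases "annot g")
    note iv = inv'[OF rhd_inv.hyps an]
    have "interp d (RhdInv A B C g) (a @ b) J = interp d g a (J @ b)" by (rule rhd_inv_interp[OF ab(2) J ab(3)])
    also have "\<dots> = G g a (J @ b)" using rhd_inv.IH app_idx[OF J ab(3)] ab(2) by simp
    also have "\<dots> = G (RhdInv A B C g) (a @ b) J"
      by (rule rhd_inv_G[symmetric, OF an]) (use iv lenI[OF J] lenI[OF ab(2)] lenI[OF ab(3)] in simp_all)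
    finally show "interp d (RhdInv A B C g) I J = G (RhdInv A B C g) I J" using ab by simp
  qed
next
  case (lhd_inv h B A C)
  show ?case
  proof (intro ballI)
    fix I J assume I: "I \<in> idx (sh d (Ten A B))" and J: "J \<in> idx (sh d C)"
    obtain a b where ab: "I = a @ b" "a \<in> idx (sh d A)" "b \<in> idx (sh d B)" using idx_split[OF I[simplified]] by blast
    obtain P L R where an: "annot h = (P, L, R)" by (cases "annot h")
    note iv = inv'[OF lhd_inv.hyps an]
    have "interp d (LhdInv A B C h) (a @ b) J = interp d h b (a @ J)" by (rule lhd_inv_interp[OF ab(2) J ab(3)])
    also have "\<dots> = G h b (a @ J)" using lhd_inv.IH app_idx[OF ab(2) J] ab(3) by simp
    also have "\<dots> = G (LhdInv A B C h) (a @ b) J"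
      by (rule lhd_inv_G[symmetric, OF an]) (use iv lenI[OF J] lenI[OF ab(2)] lenI[OF ab(3)] in simp_all)
    finally show "interp d (LhdInv A B C h) I J = G (LhdInv A B C h) I J" using ab by simp
  qed
next
  case (ten_m f A B g C D)
  show ?case
  proof (intro ballI)
    fix I J assume I: "I \<in> idx (sh d (Ten A C))" and J: "J \<in> idx (sh d (Ten B D))"
    obtain a c where ac: "I = a @ c" "a \<in> idx (sh d A)" "c \<in> idx (sh d C)" using idx_split[OF I[simplified]] by blast
    obtain b e where be: "J = b @ e" "b \<in> idx (sh d B)" "e \<in> idx (sh d D)" using idx_split[OF J[simplified]] by blast
    obtain P1 Lf Rf where af: "annot f = (P1, Lf, Rf)" by (cases "annot f")
    obtain P2 Lg Rg where ag: "annot g = (P2, Lg, Rg)" by (cases "annot g")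
    note ivf = inv'[OF ten_m.hyps(1) af] and ivg = inv'[OF ten_m.hyps(2) ag]
    have "interp d (TenM A B C D f g) (a @ c) (b @ e) = interp d f a b * interp d g c e"
      by (rule ten_interp[OF ac(2,3) be(2,3)])
    also have "\<dots> = G f a b * G g c e" using ten_m.IH ac be by simp
    also have "\<dots> = G (TenM A B C D f g) (a @ c) (b @ e)"
      by (rule ten_G[symmetric, OF af ag])
         (use ivf ivg lenI[OF ac(2)] lenI[OF ac(3)] lenI[OF be(2)] lenI[OF be(3)] in simp_all)
    finally show "interp d (TenM A B C D f g) I J = G (TenM A B C D f g) I J" using ac be by simp
  qed
next
  case (ovr_m f A B g C D)
  show ?case
  proof (intro ballI)
    fix I J assume I: "I \<in> idx (sh d (Ovr A D))" and J: "J \<in> idx (sh d (Ovr B C))"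
    obtain a e where ae: "I = a @ e" "a \<in> idx (sh d A)" "e \<in> idx (sh d D)" using idx_split[OF I[simplified]] by blast
    obtain b c where bc: "J = b @ c" "b \<in> idx (sh d B)" "c \<in> idx (sh d C)" using idx_split[OF J[simplified]] by blast
    obtain P1 Lf Rf where af: "annot f = (P1, Lf, Rf)" by (cases "annot f")
    obtain P2 Lg Rg where ag: "annot g = (P2, Lg, Rg)" by (cases "annot g")
    note ivf = inv'[OF ovr_m.hyps(1) af] and ivg = inv'[OF ovr_m.hyps(2) ag]
    have "interp d (OvrM A B C D f g) (a @ e) (b @ c) = interp d f a b * interp d g c e"
      by (rule ovr_interp[OF ae(2) bc(3) bc(2) ae(3)])
    also have "\<dots> = G f a b * G g c e" using ovr_m.IH ae bc by simp
    also have "\<dots> = G (OvrM A B C D f g) (a @ e) (b @ c)"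
      by (rule ovr_G[symmetric, OF af ag])
         (use ivf ivg lenI[OF ae(2)] lenI[OF ae(3)] lenI[OF bc(2)] lenI[OF bc(3)] in simp_all)
    finally show "interp d (OvrM A B C D f g) I J = G (OvrM A B C D f g) I J" using ae bc by simp
  qed
next
  case (und_m f A B g C D)
  show ?case
  proof (intro ballI)
    fix I J assume I: "I \<in> idx (sh d (Und B C))" and J: "J \<in> idx (sh d (Und A D))"
    obtain b c where bc: "I = b @ c" "b \<in> idx (sh d B)" "c \<in> idx (sh d C)" using idx_split[OF I[simplified]] by blast
    obtain a e where ae: "J = a @ e" "a \<in> idx (sh d A)" "e \<in> idx (sh d D)" using idx_split[OF J[simplified]] by blast
    obtain P1 Lf Rf where af: "annot f = (P1, Lf, Rf)" by (cases "annot f")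
    obtain P2 Lg Rg where ag: "annot g = (P2, Lg, Rg)" by (cases "annot g")
    note ivf = inv'[OF und_m.hyps(1) af] and ivg = inv'[OF und_m.hyps(2) ag]
    have "interp d (UndM A B C D f g) (b @ c) (a @ e) = interp d f a b * interp d g c e"
      by (rule und_interp[OF ae(2) bc(3) bc(2) ae(3)])
    also have "\<dots> = G f a b * G g c e" using und_m.IH ae bc by simp
    also have "\<dots> = G (UndM A B C D f g) (b @ c) (a @ e)"
      by (rule und_G[symmetric, OF af ag])
         (use ivf ivg lenI[OF ae(2)] lenI[OF ae(3)] lenI[OF bc(2)] lenI[OF bc(3)] in simp_all)
    finally show "interp d (UndM A B C D f g) I J = G (UndM A B C D f g) I J" using ae bc by simp
  qed
next
  case (sigma_l f B A C D)
  show ?case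
  proof (intro ballI)
    fix I J assume I: "I \<in> idx (sh d (Ten (Dia A) (Ten B C)))" and J: "J \<in> idx (sh d D)"
    obtain a b c where abc: "I = a @ b @ c" "a \<in> idx (sh d A)" "b \<in> idx (sh d B)" "c \<in> idx (sh d C)"
      using idx_split3[OF I[simplified]] by blast
    obtain P L R where an: "annot f = (P, L, R)" by (cases "annot f")
    note iv = inv'[OF sigma_l.hyps an]
    have "interp d (SigmaL A B C D f) (a @ b @ c) J = interp d f (b @ a @ c) J" by (rule sigmal_interp[OF abc(2,3,4)])
    also have "\<dots> = G f (b @ a @ c) J" using sigma_l.IH abc J by simp
    also have "\<dots> = G (SigmaL A B C D f) (a @ b @ c) J"
      by (rule sigmal_G[symmetric, OF an])
        (use iv lenI[OF J] lenI[OF abc(2)] lenI[OF abc(3)] lenI[OF abc(4)] in simp_all)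
    finally show "interp d (SigmaL A B C D f) I J = G (SigmaL A B C D f) I J" using abc by simp
  qed
next
  case (sigma_r f A C B D)
  show ?case
  proof (intro ballI)
    fix I J assume I: "I \<in> idx (sh d (Ten (Ten A B) (Dia C)))" and J: "J \<in> idx (sh d D)"
    obtain a b c where abc: "I = a @ b @ c" "a \<in> idx (sh d A)" "b \<in> idx (sh d B)" "c \<in> idx (sh d C)"
      using idx_split3[of I "sh d A" "sh d B" "sh d C"] I by auto
    obtain P L R where an: "annot f = (P, L, R)" by (cases "annot f")
    note iv = inv'[OF sigma_r.hyps an]
    have "interp d (SigmaR A B C D f) (a @ b @ c) J = interp d f (a @ c @ b) J" by (rule sigmar_interp[OF abc(2,3,4)])
    also have "\<dots> = G f (a @ c @ b) J" using sigma_r.IH abc J by simp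
    also have "\<dots> = G (SigmaR A B C D f) (a @ b @ c) J"
      by (rule sigmar_G[symmetric, OF an])
        (use iv lenI[OF J] lenI[OF abc(2)] lenI[OF abc(3)] lenI[OF abc(4)] in simp_all)
    finally show "interp d (SigmaR A B C D f) I J = G (SigmaR A B C D f) I J" using abc by simp
  qed
qed


theorem mainTheorem1:
  fixes d :: "'a \<Rightarrow> nat" and f :: "'a deriv" and A B :: "'a fm"
  assumes "derives f A B"
  shows "\<forall>I\<in>idx (sh d A). \<forall>J\<in>idx (sh d B). interp d f I J = G f I J"
  using main[OF assms] .

end
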